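(* On the algebra $\mathcal O^\star(\mathbb C^\times)$ of analytic functionals on $\mathbb C^\times=\mathbb C\setminus\{0\}$ (with convolution), the seminorms $\|\alpha\|_N=\sum_{|n|\le N}|\alpha_n|$, $N\in\mathbb N$, are continuous and submultiplicative, and they form a fundamental system among all continuous submultiplicative seminorms: for every continuous submultiplicative seminorm $p$ on $\mathcal O^\star(\mathbb C^\times)$ there exist $N\in\mathbb N$ and $M>0$ with $p(\alpha)\le M\|\alpha\|_N$ for all $\alpha$.
   Context: $\mathcal O(\mathbb C^\times)$: holomorphic functions on $\mathbb C^\times$ with topology of uniform convergence on compacts; $\mathcal O^\star(\mathbb C^\times)$: its dual with topology of uniform convergence on compact subsets of $\mathcal O(\mathbb C^\times)$. For $\alpha\in\mathcal O^\star(\mathbb C^\times)$ and $n\in\mathbb Z$, $\alpha_n=\alpha(z^n)$ where $z^n(x)=x^n$. Convolution with respect to the multiplicative group: $(\alpha*\beta)(u)=\alpha(s\mapsto\beta(t\mapsto u(st)))$; in coefficients $(\alpha*\beta)_n=\alpha_n\beta_n$. *)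

theory Defs
  imports "HOL-Analysis.Analysis"
begin

text \<open>The space O(C^x) of holomorphic functions on C minus 0 (values at 0 are irrelevant).\<close>
definition OC :: "(complex \<Rightarrow> complex) set" where
  "OC = {f. f holomorphic_on (- {0})}"

definition OC_top :: "(complex \<Rightarrow> complex) topology" where
  "OC_top = topology (\<lambda>U. U \<subseteq> OC \<and>
     (\<forall>f\<in>U. \<exists>K e. compact K \<and> K \<subseteq> - {0} \<and> e > 0 \<and>
        {g\<in>OC. \<forall>z\<in>K. cmod (g z - f z) \<le> e} \<subseteq> U))"

text \<open>The dual O*(C^x): continuous linear functionals on OC, normalised to be 0 off OC.\<close>
definition OCdual :: "((complex \<Rightarrow> complex) \<Rightarrow> complex) set" where
  "OCdual = {\<alpha>. (\<forall>f\<in>OC. \<forall>g\<in>OC. \<alpha> (\<lambda>x. f x + g x) = \<alpha> f + \<alpha> g)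
      \<and> (\<forall>c. \<forall>f\<in>OC. \<alpha> (\<lambda>x. c * f x) = c * \<alpha> f)
      \<and> continuous_map OC_top euclidean \<alpha>
      \<and> (\<forall>f. f \<notin> OC \<longrightarrow> \<alpha> f = 0)}"

definition OCdual_top :: "((complex \<Rightarrow> complex) \<Rightarrow> complex) topology" where
  "OCdual_top = topology (\<lambda>U. U \<subseteq> OCdual \<and>
     (\<forall>\<alpha>\<in>U. \<exists>B e. compactin OC_top B \<and> e > 0 \<and>
        {\<beta>\<in>OCdual. \<forall>f\<in>B. cmod (\<beta> f - \<alpha> f) \<le> e} \<subseteq> U))"

definition dadd :: "((complex \<Rightarrow> complex) \<Rightarrow> complex) \<Rightarrow> ((complex \<Rightarrow> complex) \<Rightarrow> complex)
    \<Rightarrow> ((complex \<Rightarrow> complex) \<Rightarrow> complex)" where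
  "dadd \<alpha> \<beta> = (\<lambda>f. \<alpha> f + \<beta> f)"

definition dscale :: "complex \<Rightarrow> ((complex \<Rightarrow> complex) \<Rightarrow> complex) \<Rightarrow> ((complex \<Rightarrow> complex) \<Rightarrow> complex)" where
  "dscale c \<alpha> = (\<lambda>f. c * \<alpha> f)"

definition conv :: "((complex \<Rightarrow> complex) \<Rightarrow> complex) \<Rightarrow> ((complex \<Rightarrow> complex) \<Rightarrow> complex)
    \<Rightarrow> ((complex \<Rightarrow> complex) \<Rightarrow> complex)" where
  "conv \<alpha> \<beta> = (\<lambda>u. if u \<in> OC then \<alpha> (\<lambda>s. \<beta> (\<lambda>t. u (s * t))) else 0)"

definition coef :: "((complex \<Rightarrow> complex) \<Rightarrow> complex) \<Rightarrow> int \<Rightarrow> complex" where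
  "coef \<alpha> n = \<alpha> (\<lambda>x. x powi n)"

definition normN :: "nat \<Rightarrow> ((complex \<Rightarrow> complex) \<Rightarrow> complex) \<Rightarrow> real" where
  "normN N \<alpha> = (\<Sum>n\<in>{- int N..int N}. cmod (coef \<alpha> n))"

definition dual_seminorm :: "(((complex \<Rightarrow> complex) \<Rightarrow> complex) \<Rightarrow> real) \<Rightarrow> bool" where
  "dual_seminorm p \<longleftrightarrow>
     (\<forall>\<alpha>\<in>OCdual. p \<alpha> \<ge> 0)
   \<and> (\<forall>\<alpha>\<in>OCdual. \<forall>\<beta>\<in>OCdual. p (dadd \<alpha> \<beta>) \<le> p \<alpha> + p \<beta>)
   \<and> (\<forall>c. \<forall>\<alpha>\<in>OCdual. p (dscale c \<alpha>) = cmod c * p \<alpha>)"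

definition submultiplicative :: "(((complex \<Rightarrow> complex) \<Rightarrow> complex) \<Rightarrow> real) \<Rightarrow> bool" where
  "submultiplicative p \<longleftrightarrow> (\<forall>\<alpha>\<in>OCdual. \<forall>\<beta>\<in>OCdual. p (conv \<alpha> \<beta>) \<le> p \<alpha> * p \<beta>)"

definition cont_seminorm :: "(((complex \<Rightarrow> complex) \<Rightarrow> complex) \<Rightarrow> real) \<Rightarrow> bool" where
  "cont_seminorm p \<longleftrightarrow> continuous_map OCdual_top euclideanreal p"

end

theory Submission
  imports Defs "HOL-Complex_Analysis.Complex_Analysis"
begin


lemma istop_gen:
  assumes Pu: "\<And>K1 K2. P K1 \<Longrightarrow> P K2 \<Longrightarrow> P (K1 \<union> K2)"
    and Nm: "\<And>K1 K2 e1 e2 f. N (K1 \<union> K2) (min e1 e2) f \<subseteq> N K1 e1 f \<inter> N K2 e2 f"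
  shows "istopology (\<lambda>U. U \<subseteq> X \<and> (\<forall>f\<in>U. \<exists>K e. P K \<and> (e::real) > 0 \<and> N K e f \<subseteq> U))"
  unfolding istopology_def
proof (rule conjI; intro allI impI)
  fix S T
  assume S: "S \<subseteq> X \<and> (\<forall>f\<in>S. \<exists>K e. P K \<and> (e::real) > 0 \<and> N K e f \<subseteq> S)"
    and T: "T \<subseteq> X \<and> (\<forall>f\<in>T. \<exists>K e. P K \<and> (e::real) > 0 \<and> N K e f \<subseteq> T)"
  have S1: "S \<subseteq> X" and S2: "\<And>f. f \<in> S \<Longrightarrow> \<exists>K e. P K \<and> (e::real) > 0 \<and> N K e f \<subseteq> S"
    using S by auto
  have T1: "T \<subseteq> X" and T2: "\<And>f. f \<in> T \<Longrightarrow> \<exists>K e. P K \<and> (e::real) > 0 \<and> N K e f \<subseteq> T"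
    using T by auto
  show "S \<inter> T \<subseteq> X \<and> (\<forall>f\<in>S \<inter> T. \<exists>K e. P K \<and> (e::real) > 0 \<and> N K e f \<subseteq> S \<inter> T)"
  proof (intro conjI ballI)
    show "S \<inter> T \<subseteq> X" using S1 by blast
    fix f assume f: "f \<in> S \<inter> T"
    obtain K1 e1 where 1: "P K1" "(e1::real) > 0" "N K1 e1 f \<subseteq> S" using S2 f by blast
    obtain K2 e2 where 2: "P K2" "(e2::real) > 0" "N K2 e2 f \<subseteq> T" using T2 f by blast
    have "N (K1 \<union> K2) (min e1 e2) f \<subseteq> S \<inter> T" using Nm[of K1 K2 e1 e2 f] 1(3) 2(3) by blast
    then show "\<exists>K e. P K \<and> (e::real) > 0 \<and> N K e f \<subseteq> S \<inter> T"
      using Pu[OF 1(1) 2(1)] 1(2) 2(2) by (intro exI[of _ "K1 \<union> K2"] exI[of _ "min e1 e2"]) simp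
  qed
next
  fix KK
  assume H: "\<forall>U\<in>KK. U \<subseteq> X \<and> (\<forall>f\<in>U. \<exists>K e. P K \<and> (e::real) > 0 \<and> N K e f \<subseteq> U)"
  show "\<Union>KK \<subseteq> X \<and> (\<forall>f\<in>\<Union>KK. \<exists>K e. P K \<and> (e::real) > 0 \<and> N K e f \<subseteq> \<Union>KK)"
  proof (intro conjI ballI)
    show "\<Union>KK \<subseteq> X" using H by blast
    fix f assume "f \<in> \<Union>KK"
    then obtain U where U: "U \<in> KK" "f \<in> U" by blast
    then have "\<exists>K e. P K \<and> (e::real) > 0 \<and> N K e f \<subseteq> U" using H by blast
    then obtain K e where "P K" "(e::real) > 0" "N K e f \<subseteq> U" by blast
    then show "\<exists>K e. P K \<and> (e::real) > 0 \<and> N K e f \<subseteq> \<Union>KK" using U by blast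
  qed
qed

lemma istop_OC: "istopology (\<lambda>U. U \<subseteq> OC \<and>
     (\<forall>f\<in>U. \<exists>K e. compact K \<and> K \<subseteq> - {0} \<and> e > 0 \<and>
        {g\<in>OC. \<forall>z\<in>K. cmod (g z - f z) \<le> e} \<subseteq> U))"
proof -
  have "istopology (\<lambda>U. U \<subseteq> OC \<and> (\<forall>f\<in>U. \<exists>K e. (compact K \<and> K \<subseteq> - {0}) \<and> (e::real) > 0 \<and>
        {g\<in>OC. \<forall>z\<in>K. cmod (g z - f z) \<le> e} \<subseteq> U))"
    by (rule istop_gen) (auto simp: compact_Un)
  then show ?thesis by (simp only: conj_assoc)
qed

lemma openin_OC_top: "openin OC_top U \<longleftrightarrow> U \<subseteq> OC \<and>
     (\<forall>f\<in>U. \<exists>K e. compact K \<and> K \<subseteq> - {0} \<and> e > 0 \<and>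
        {g\<in>OC. \<forall>z\<in>K. cmod (g z - f z) \<le> e} \<subseteq> U)"
  unfolding OC_top_def by (simp only: topology_inverse'[OF istop_OC])

lemma topspace_OC_top: "topspace OC_top = OC"
proof
  show "topspace OC_top \<subseteq> OC" unfolding topspace_def using openin_OC_top by auto
  have "openin OC_top OC" unfolding openin_OC_top
  proof (intro conjI ballI)
    fix f assume "f \<in> OC"
    show "\<exists>K e. compact K \<and> K \<subseteq> - {0} \<and> e > 0 \<and> {g\<in>OC. \<forall>z\<in>K. cmod (g z - f z) \<le> e} \<subseteq> OC"
      by (rule exI[of _ "{}"], rule exI[of _ "1::real"]) auto
  qed simp
  then show "OC \<subseteq> topspace OC_top" by (simp add: openin_subset)
qed

lemma istop_OCdual: "istopology (\<lambda>U. U \<subseteq> OCdual \<and>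
     (\<forall>\<alpha>\<in>U. \<exists>B e. compactin OC_top B \<and> e > 0 \<and>
        {\<beta>\<in>OCdual. \<forall>f\<in>B. cmod (\<beta> f - \<alpha> f) \<le> e} \<subseteq> U))"
  by (rule istop_gen) (auto simp: compactin_Un)

lemma openin_OCdual_top: "openin OCdual_top U \<longleftrightarrow> U \<subseteq> OCdual \<and>
     (\<forall>\<alpha>\<in>U. \<exists>B e. compactin OC_top B \<and> e > 0 \<and>
        {\<beta>\<in>OCdual. \<forall>f\<in>B. cmod (\<beta> f - \<alpha> f) \<le> e} \<subseteq> U)"
  unfolding OCdual_top_def by (simp only: topology_inverse'[OF istop_OCdual])

lemma topspace_OCdual_top: "topspace OCdual_top = OCdual"
proof
  show "topspace OCdual_top \<subseteq> OCdual" unfolding topspace_def using openin_OCdual_top by auto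
  have "openin OCdual_top OCdual" unfolding openin_OCdual_top
  proof (intro conjI ballI)
    fix a assume "a \<in> OCdual"
    show "\<exists>B e. compactin OC_top B \<and> e > 0 \<and> {\<beta>\<in>OCdual. \<forall>f\<in>B. cmod (\<beta> f - a f) \<le> e} \<subseteq> OCdual"
      by (rule exI[of _ "{}"], rule exI[of _ "1::real"]) auto
  qed simp
  then show "OCdual \<subseteq> topspace OCdual_top" by (simp add: openin_subset)
qed



lemma OC_holo: "f \<in> OC \<Longrightarrow> f holomorphic_on (- {0})" by (simp add: OC_def)

lemma OC_powi[simp]: "(\<lambda>x. x powi n) \<in> OC"
  unfolding OC_def by (auto intro!: holomorphic_intros)

lemma OC_const[simp]: "(\<lambda>x. c) \<in> OC"
  unfolding OC_def by (auto intro!: holomorphic_intros)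

lemma OC_add: "f \<in> OC \<Longrightarrow> g \<in> OC \<Longrightarrow> (\<lambda>x. f x + g x) \<in> OC"
  unfolding OC_def by (auto intro!: holomorphic_intros)

lemma OC_diff: "f \<in> OC \<Longrightarrow> g \<in> OC \<Longrightarrow> (\<lambda>x. f x - g x) \<in> OC"
  unfolding OC_def by (auto intro!: holomorphic_intros)

lemma OC_mult: "f \<in> OC \<Longrightarrow> g \<in> OC \<Longrightarrow> (\<lambda>x. f x * g x) \<in> OC"
  unfolding OC_def by (auto intro!: holomorphic_intros)

lemma OC_cmult: "f \<in> OC \<Longrightarrow> (\<lambda>x. c * f x) \<in> OC"
  unfolding OC_def by (auto intro!: holomorphic_intros)

lemma OC_sum: "(\<And>i. i \<in> I \<Longrightarrow> F i \<in> OC) \<Longrightarrow> (\<lambda>x. \<Sum>i\<in>I. F i x) \<in> OC"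
  unfolding OC_def by (auto intro!: holomorphic_intros)

lemma OC_scale: assumes "f \<in> OC" shows "(\<lambda>t. f (s * t)) \<in> OC"
proof (cases "s = 0")
  case True then show ?thesis by simp
next
  case False
  have "(f \<circ> (\<lambda>t. s * t)) holomorphic_on (- {0})"
    by (rule holomorphic_on_compose_gen[OF _ OC_holo[OF assms]]) (use False in \<open>auto intro!: holomorphic_intros\<close>)
  then show ?thesis by (simp add: OC_def o_def)
qed

lemma OC_cont: "f \<in> OC \<Longrightarrow> K \<subseteq> - {0} \<Longrightarrow> continuous_on K f"
  by (meson OC_holo holomorphic_on_imp_continuous_on holomorphic_on_subset)

lemma OC_bounded: assumes "f \<in> OC" "compact K" "K \<subseteq> - {0}" shows "\<exists>b. \<forall>z\<in>K. cmod (f z) \<le> b"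
proof -
  have "compact (f ` K)" using compact_continuous_image[OF OC_cont[OF assms(1,3)] assms(2)] .
  then obtain b where "\<forall>y\<in>f ` K. norm y \<le> b" using compact_imp_bounded bounded_iff by metis
  then show ?thesis by auto
qed

lemma cont_crit:
  assumes "\<And>f \<epsilon>. f \<in> OC \<Longrightarrow> \<epsilon> > 0 \<Longrightarrow> \<exists>K e. compact K \<and> K \<subseteq> - {0} \<and> e > 0 \<and>
       (\<forall>g\<in>OC. (\<forall>z\<in>K. cmod (g z - f z) \<le> e) \<longrightarrow> cmod (\<alpha> g - \<alpha> f) < \<epsilon>)"
  shows "continuous_map OC_top euclidean \<alpha>"
  unfolding continuous_map_def
proof (intro conjI allI impI)
  show "\<alpha> \<in> topspace OC_top \<rightarrow> topspace euclidean" by simp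
  fix U :: "complex set" assume "openin euclidean U"
  then have oU: "open U" by simp
  show "openin OC_top {x \<in> topspace OC_top. \<alpha> x \<in> U}"
    unfolding openin_OC_top topspace_OC_top
  proof (intro conjI ballI)
    show "{x \<in> OC. \<alpha> x \<in> U} \<subseteq> OC" by blast
    fix f assume f: "f \<in> {x \<in> OC. \<alpha> x \<in> U}"
    then obtain \<epsilon> where \<epsilon>: "\<epsilon> > 0" "ball (\<alpha> f) \<epsilon> \<subseteq> U" using oU open_contains_ball by blast
    obtain K e where Ke: "compact K" "K \<subseteq> - {0}" "e > 0"
       "\<forall>g\<in>OC. (\<forall>z\<in>K. cmod (g z - f z) \<le> e) \<longrightarrow> cmod (\<alpha> g - \<alpha> f) < \<epsilon>"
      using assms[of f \<epsilon>] f \<epsilon>(1) by blast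
    have "{g \<in> OC. \<forall>z\<in>K. cmod (g z - f z) \<le> e} \<subseteq> {x \<in> OC. \<alpha> x \<in> U}"
    proof
      fix g assume g: "g \<in> {g \<in> OC. \<forall>z\<in>K. cmod (g z - f z) \<le> e}"
      then have "cmod (\<alpha> g - \<alpha> f) < \<epsilon>" using Ke(4) by blast
      then have "\<alpha> g \<in> ball (\<alpha> f) \<epsilon>" by (simp add: dist_norm norm_minus_commute)
      then show "g \<in> {x \<in> OC. \<alpha> x \<in> U}" using g \<epsilon>(2) by blast
    qed
    then show "\<exists>K e. compact K \<and> K \<subseteq> - {0} \<and> e > 0 \<and>
        {g \<in> OC. \<forall>z\<in>K. cmod (g z - f z) \<le> e} \<subseteq> {x \<in> OC. \<alpha> x \<in> U}"
      using Ke by blast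
  qed
qed

definition islin :: "((complex \<Rightarrow> complex) \<Rightarrow> complex) \<Rightarrow> bool" where
  "islin \<alpha> \<longleftrightarrow> (\<forall>f\<in>OC. \<forall>g\<in>OC. \<alpha> (\<lambda>x. f x + g x) = \<alpha> f + \<alpha> g)
      \<and> (\<forall>c. \<forall>f\<in>OC. \<alpha> (\<lambda>x. c * f x) = c * \<alpha> f)"

lemma OCdual_islin: "\<alpha> \<in> OCdual \<Longrightarrow> islin \<alpha>"
  by (simp add: OCdual_def islin_def)

lemma islin_add: "islin \<alpha> \<Longrightarrow> f \<in> OC \<Longrightarrow> g \<in> OC \<Longrightarrow> \<alpha> (\<lambda>x. f x + g x) = \<alpha> f + \<alpha> g"
  unfolding islin_def by blast

lemma islin_cmult: "islin \<alpha> \<Longrightarrow> f \<in> OC \<Longrightarrow> \<alpha> (\<lambda>x. c * f x) = c * \<alpha> f"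
  unfolding islin_def by blast

lemma islin_diff: assumes "islin \<alpha>" "f \<in> OC" "g \<in> OC" shows "\<alpha> (\<lambda>x. f x - g x) = \<alpha> f - \<alpha> g"
proof -
  have "\<alpha> (\<lambda>x. f x + (-1) * g x) = \<alpha> f + \<alpha> (\<lambda>x. (-1) * g x)"
    by (rule islin_add[OF assms(1,2) OC_cmult[OF assms(3)]])
  also have "\<alpha> (\<lambda>x. (-1) * g x) = (-1) * \<alpha> g" by (rule islin_cmult[OF assms(1,3)])
  also have "(\<lambda>x. f x + (-1) * g x) = (\<lambda>x. f x - g x)" by simp
  finally show ?thesis by simp
qed

lemma islin_zero: assumes "islin \<alpha>" shows "\<alpha> (\<lambda>x. 0) = 0"
proof -
  have "\<alpha> (\<lambda>x. 0 * (0::complex)) = 0 * \<alpha> (\<lambda>x. 0)"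
    using islin_cmult[OF assms OC_const[of 0], of 0] by simp
  then show ?thesis by simp
qed

lemma islin_sum: assumes "islin \<alpha>" "finite I" "\<And>i. i \<in> I \<Longrightarrow> F i \<in> OC"
  shows "\<alpha> (\<lambda>x. \<Sum>i\<in>I. F i x) = (\<Sum>i\<in>I. \<alpha> (F i))"
  using assms(2,3)
proof (induction I rule: finite_induct)
  case empty then show ?case using islin_zero[OF assms(1)] by simp
next
  case (insert i I)
  have "\<alpha> (\<lambda>x. \<Sum>j\<in>insert i I. F j x) = \<alpha> (\<lambda>x. F i x + (\<Sum>j\<in>I. F j x))"
    using insert by simp
  also have "\<dots> = \<alpha> (F i) + \<alpha> (\<lambda>x. \<Sum>j\<in>I. F j x)"
    using islin_add[OF assms(1) insert(4)[of i] OC_sum[of I F]] insert(4) by simp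
  finally show ?case using insert by simp
qed

lemma lin_bound_cont:
  assumes "islin \<alpha>" "compact K" "K \<subseteq> - {0}" "C \<ge> 0"
    and bd: "\<And>g t. g \<in> OC \<Longrightarrow> t \<ge> 0 \<Longrightarrow> (\<forall>z\<in>K. cmod (g z) \<le> t) \<Longrightarrow> cmod (\<alpha> g) \<le> C * t"
  shows "continuous_map OC_top euclidean \<alpha>"
proof (rule cont_crit)
  fix f and \<epsilon> :: real assume f: "f \<in> OC" and \<epsilon>: "\<epsilon> > 0"
  define e where "e = \<epsilon> / (C + 1)"
  have e: "e > 0" using \<epsilon> assms(4) by (simp add: e_def)
  have "C * e < \<epsilon>" using \<epsilon> assms(4) by (simp add: e_def field_simps)
  show "\<exists>K e. compact K \<and> K \<subseteq> - {0} \<and> e > 0 \<and>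
       (\<forall>g\<in>OC. (\<forall>z\<in>K. cmod (g z - f z) \<le> e) \<longrightarrow> cmod (\<alpha> g - \<alpha> f) < \<epsilon>)"
  proof (intro exI conjI ballI impI)
    fix g assume g: "g \<in> OC" "\<forall>z\<in>K. cmod (g z - f z) \<le> e"
    have "cmod (\<alpha> g - \<alpha> f) = cmod (\<alpha> (\<lambda>x. g x - f x))" using islin_diff[OF assms(1) g(1) f] by simp
    also have "\<dots> \<le> C * e" using bd[OF OC_diff[OF g(1) f], of e] g(2) e by simp
    finally show "cmod (\<alpha> g - \<alpha> f) < \<epsilon>" using \<open>C * e < \<epsilon>\<close> by simp
  qed (use assms e in auto)
qed

lemma OCdual_bound:
  assumes "\<alpha> \<in> OCdual"
  shows "\<exists>K C. compact K \<and> K \<subseteq> - {0} \<and> C > 0 \<and>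
     (\<forall>g\<in>OC. \<forall>t\<ge>0. (\<forall>z\<in>K. cmod (g z) \<le> t) \<longrightarrow> cmod (\<alpha> g) \<le> C * t)"
proof -
  have lin: "islin \<alpha>" using OCdual_islin[OF assms] .
  have cm: "continuous_map OC_top euclidean \<alpha>" using assms by (simp add: OCdual_def)
  have "openin euclidean (ball (0::complex) 1)" by simp
  then have "openin OC_top {x \<in> topspace OC_top. \<alpha> x \<in> ball 0 1}"
    using cm[unfolded continuous_map_def, THEN conjunct2, rule_format, of "ball 0 1"] by simp
  then have op: "openin OC_top {x \<in> OC. \<alpha> x \<in> ball 0 1}" by (simp add: topspace_OC_top)
  have z: "(\<lambda>x. 0) \<in> {x \<in> OC. \<alpha> x \<in> ball 0 1}" using islin_zero[OF lin] by simp
  obtain K e where Ke: "compact K" "K \<subseteq> - {0}" "e > 0"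
    "{g\<in>OC. \<forall>z\<in>K. cmod (g z - 0) \<le> e} \<subseteq> {x \<in> OC. \<alpha> x \<in> ball 0 1}"
    using op[unfolded openin_OC_top, THEN conjunct2, rule_format, OF z] by blast
  have pos: "cmod (\<alpha> g) \<le> t / e" if g: "g \<in> OC" "\<forall>z\<in>K. cmod (g z) \<le> t" "t > 0" for g t
  proof -
    have "(\<lambda>x. (e / t) * g x) \<in> OC" using OC_cmult[OF g(1)] .
    moreover have "\<forall>z\<in>K. cmod ((e / t) * g z - 0) \<le> e"
    proof
      fix z assume "z \<in> K"
      then have "cmod (g z) \<le> t" using g by blast
      then have "(e / t) * cmod (g z) \<le> (e / t) * t" using Ke(3) g(3) by (intro mult_left_mono) auto
      then show "cmod ((e / t) * g z - 0) \<le> e" using g(3) Ke(3) by (simp add: norm_mult norm_divide)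
    qed
    ultimately have "\<alpha> (\<lambda>x. (e / t) * g x) \<in> ball 0 1" using Ke(4) by blast
    then have "cmod (\<alpha> (\<lambda>x. (e / t) * g x)) < 1" by simp
    then have "cmod ((e / t) * \<alpha> g) < 1" by (simp only: islin_cmult[OF lin g(1)])
    then have "(e / t) * cmod (\<alpha> g) < 1" using g(3) Ke(3) by (simp add: norm_mult norm_divide)
    then show ?thesis using Ke(3) g(3) by (simp add: field_simps)
  qed
  show ?thesis
  proof (intro exI[of _ K] exI[of _ "1/e"] conjI ballI allI impI)
    fix g t assume g: "g \<in> OC" "t \<ge> 0" "\<forall>z\<in>K. cmod (g z) \<le> t"
    show "cmod (\<alpha> g) \<le> (1 / e) * t"
    proof (cases "t > 0")
      case True then show ?thesis using pos[OF g(1,3) True] by simp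
    next
      case False
      then have t0: "t = 0" using g(2) by simp
      have "cmod (\<alpha> g) \<le> s / e" if "s > 0" for s
      proof -
        have "\<forall>z\<in>K. cmod (g z) \<le> s" using g(3) t0 that by force
        then show ?thesis using pos[OF g(1) _ that] by blast
      qed
      have "cmod (\<alpha> g) \<le> 0"
      proof (rule ccontr)
        assume "\<not> cmod (\<alpha> g) \<le> 0"
        then have a: "cmod (\<alpha> g) > 0" by simp
        have "cmod (\<alpha> g) \<le> (cmod (\<alpha> g) * e / 2) / e"
          using \<open>\<And>s. s > 0 \<Longrightarrow> cmod (\<alpha> g) \<le> s / e\<close>[of "cmod (\<alpha> g) * e / 2"] a Ke(3) by simp
        also have "\<dots> = cmod (\<alpha> g) / 2" using Ke(3) by simp
        finally show False using a by simp
      qed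
      then show ?thesis using t0 by simp
    qed
  qed (use Ke in simp_all)
qed



lemma compactin_bound:
  assumes B: "compactin OC_top B" and K: "compact K" "K \<subseteq> - {0}"
  shows "\<exists>M. \<forall>f\<in>B. \<forall>z\<in>K. cmod (f z) \<le> M"
proof -
  define V where "V n = {f\<in>OC. \<exists>d>0. \<forall>z\<in>K. cmod (f z) \<le> real n - d}" for n :: nat
  have op: "openin OC_top (V n)" for n
    unfolding openin_OC_top
  proof (intro conjI ballI)
    show "V n \<subseteq> OC" by (auto simp: V_def)
    fix f assume "f \<in> V n"
    then obtain d where f: "f \<in> OC" "d > 0" "\<forall>z\<in>K. cmod (f z) \<le> real n - d" by (auto simp: V_def)
    have "{g \<in> OC. \<forall>z\<in>K. cmod (g z - f z) \<le> d/2} \<subseteq> V n"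
    proof
      fix g assume g: "g \<in> {g \<in> OC. \<forall>z\<in>K. cmod (g z - f z) \<le> d/2}"
      have "\<forall>z\<in>K. cmod (g z) \<le> real n - d/2"
      proof
        fix z assume z: "z \<in> K"
        have "cmod (g z) \<le> cmod (f z) + cmod (g z - f z)" by (metis norm_triangle_sub add.commute)
        then show "cmod (g z) \<le> real n - d/2" using g f(3) z by force
      qed
      then show "g \<in> V n" using g f(2) unfolding V_def by (auto intro!: exI[of _ "d/2"])
    qed
    then show "\<exists>K' e. compact K' \<and> K' \<subseteq> - {0} \<and> e > 0 \<and> {g \<in> OC. \<forall>z\<in>K'. cmod (g z - f z) \<le> e} \<subseteq> V n"
      using K f(2) by (intro exI[of _ K] exI[of _ "d/2"]) auto
  qed
  have BOC: "B \<subseteq> OC" using compactin_subset_topspace[OF B] by (simp add: topspace_OC_top)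
  have cov: "B \<subseteq> \<Union>(range V)"
  proof
    fix f assume "f \<in> B"
    then have f: "f \<in> OC" using BOC by blast
    obtain b where b: "\<forall>z\<in>K. cmod (f z) \<le> b" using OC_bounded[OF f K] by blast
    have "f \<in> V (nat \<lceil>b\<rceil> + 1)" unfolding V_def
    proof (intro CollectI conjI exI[of _ 1])
      show "\<forall>z\<in>K. cmod (f z) \<le> real (nat \<lceil>b\<rceil> + 1) - 1"
        using b by (smt (verit, best) of_nat_1 of_nat_add real_nat_ceiling_ge)
    qed (use f in auto)
    then show "f \<in> \<Union>(range V)" by blast
  qed
  have opr: "\<forall>U\<in>range V. openin OC_top U" using op by blast
  obtain F where F: "finite F" "F \<subseteq> range V" "B \<subseteq> \<Union>F"
    using B[unfolded compactin_def, THEN conjunct2, rule_format, of "range V"] opr cov by blast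
  obtain N where N: "finite N" "F = V ` N" using finite_subset_image[OF F(1,2)] by blast
  show ?thesis
  proof (intro exI[of _ "real (\<Sum>N)"] ballI)
    fix f z assume f: "f \<in> B" and z: "z \<in> K"
    obtain n where n: "n \<in> N" "f \<in> V n" using F(3) f N(2) by blast
    then obtain d where "d > 0" "cmod (f z) \<le> real n - d" using z by (auto simp: V_def)
    moreover have "n \<le> \<Sum>N" using member_le_sum[of n N "\<lambda>x. x"] n(1) N(1) by simp
    ultimately show "cmod (f z) \<le> real (\<Sum>N)" by linarith
  qed
qed

definition lc :: "(complex \<Rightarrow> complex) \<Rightarrow> int \<Rightarrow> complex" where
  "lc f n = contour_integral (circlepath 0 1) (\<lambda>w. f w * w powi (- n - 1)) / (2 * pi * \<i>)"

lemma OC_holo_UNIV: "f \<in> OC \<Longrightarrow> f holomorphic_on (UNIV - {0})"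
  by (simp add: OC_def Compl_eq_Diff_UNIV)

lemma lc_radius:
  assumes f: "f \<in> OC" and r: "r > 0"
  shows "((\<lambda>w. f w * w powi (- n - 1)) has_contour_integral (2 * pi * \<i> * lc f n)) (circlepath 0 r)"
proof -
  let ?g = "\<lambda>w. f w * w powi (- n - 1)"
  have hol: "?g holomorphic_on (UNIV - {0})"
    using OC_holo_UNIV[OF f] by (auto intro!: holomorphic_intros)
  have "?g contour_integrable_on circlepath 0 r \<and> contour_integral (circlepath 0 r) ?g = contour_integral (circlepath 0 1) ?g"
  proof (cases "r \<le> 1")
    case True
    show ?thesis using contour_integral_circlepath_eq[OF open_UNIV hol r True subset_UNIV] by simp
  next
    case False
    then have "1 \<le> r" by simp
    show ?thesis using contour_integral_circlepath_eq[OF open_UNIV hol _ \<open>1 \<le> r\<close> subset_UNIV] by simp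
  qed
  moreover have "contour_integral (circlepath 0 1) ?g = 2 * pi * \<i> * lc f n"
    unfolding lc_def by simp
  ultimately show ?thesis by (metis has_contour_integral_integral)
qed

lemma lc_bound:
  assumes f: "f \<in> OC" and r: "r > 0" and M: "\<And>w. cmod w = r \<Longrightarrow> cmod (f w) \<le> M"
  shows "cmod (lc f n) \<le> M * r powi (- n)"
proof -
  have M0: "M \<ge> 0" using M[of "of_real r"] r by (smt (verit) norm_ge_zero norm_of_real)
  have "cmod (2 * pi * \<i> * lc f n) \<le> (M * r powi (- n - 1)) * (2 * pi * r)"
  proof (rule has_contour_integral_bound_circlepath[OF lc_radius[OF f r]])
    show "0 \<le> M * r powi (- n - 1)" using M0 r by simp
    fix x :: complex assume "cmod (x - 0) = r"
    then have x: "cmod x = r" by simp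
    have "cmod (f x * x powi (- n - 1)) = cmod (f x) * r powi (- n - 1)"
      by (simp add: norm_mult norm_power_int x)
    also have "\<dots> \<le> M * r powi (- n - 1)" using M[OF x] r by (intro mult_right_mono) auto
    finally show "cmod (f x * x powi (- n - 1)) \<le> M * r powi (- n - 1)" .
  qed (use r in auto)
  also have "\<dots> = 2 * pi * (M * (r powi (- n - 1) * r))" by (simp add: algebra_simps)
  also have "r powi (- n - 1) * r = r powi (- n)"
    using r by (simp add: power_int_diff)
  finally have "2 * pi * cmod (lc f n) \<le> 2 * pi * (M * r powi (- n))"
    by (simp add: norm_mult)
  then show ?thesis by simp
qed



lemma cint_circ:
  assumes f: "f \<in> OC" and rho: "\<rho> > 0" "cmod z \<noteq> \<rho>"
  shows "(\<lambda>w. f w / (w - z)) contour_integrable_on circlepath 0 \<rho>"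
proof (rule contour_integrable_continuous_circlepath)
  have s: "path_image (circlepath 0 \<rho>) = sphere 0 \<rho>" using rho by simp
  have "sphere (0::complex) \<rho> \<subseteq> - {0}" using rho by auto
  then have "continuous_on (sphere 0 \<rho>) f" using OC_cont[OF f] by blast
  moreover have "\<forall>w\<in>sphere 0 \<rho>. w - z \<noteq> 0" using rho by auto
  ultimately show "continuous_on (path_image (circlepath 0 \<rho>)) (\<lambda>w. f w / (w - z))"
    unfolding s by (intro continuous_intros) auto
qed

lemma cauchy_annulus:
  assumes f: "f \<in> OC" and r: "0 < r" "r < cmod z" "cmod z < R"
  shows "2 * pi * \<i> * f z = contour_integral (circlepath 0 R) (\<lambda>w. f w / (w - z))
            - contour_integral (circlepath 0 r) (\<lambda>w. f w / (w - z))"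
proof -
  define h where "h = (\<lambda>w. if w = z then deriv f z else (f w - f z) / (w - z))"
  have "h holomorphic_on (- {0})" unfolding h_def
    by (rule pole_lemma_open[OF OC_holo[OF f]]) (simp add: open_Compl)
  then have hol: "h holomorphic_on (UNIV - {0})" by (simp add: Compl_eq_Diff_UNIV)
  have rR: "r \<le> R" using r by simp
  note E = contour_integral_circlepath_eq[OF open_UNIV hol r(1) rR subset_UNIV]
  define IR where "IR = contour_integral (circlepath 0 R) (\<lambda>w. f w / (w - z))"
  define Ir where "Ir = contour_integral (circlepath 0 r) (\<lambda>w. f w / (w - z))"
  have R0: "R > 0" using r by simp
  have hIR: "((\<lambda>w. f w / (w - z)) has_contour_integral IR) (circlepath 0 R)"
    unfolding IR_def by (rule has_contour_integral_integral[OF cint_circ[OF f R0]]) (use r in simp)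
  have hIr: "((\<lambda>w. f w / (w - z)) has_contour_integral Ir) (circlepath 0 r)"
    unfolding Ir_def by (rule has_contour_integral_integral[OF cint_circ[OF f r(1)]]) (use r in simp)
  have c1: "((\<lambda>w. f z / (w - z)) has_contour_integral (2 * pi * \<i> * f z)) (circlepath 0 R)"
    using Cauchy_integral_circlepath_simple[of "\<lambda>w. f z" 0 R z] r by simp
  have c2: "((\<lambda>w. f z / (w - z)) has_contour_integral 0) (circlepath 0 r)"
  proof (rule Cauchy_theorem_convex_simple[of _ "ball 0 (cmod z)"])
    show "(\<lambda>w. f z / (w - z)) holomorphic_on ball 0 (cmod z)"
      by (intro holomorphic_intros) auto
    show "path_image (circlepath 0 r) \<subseteq> ball 0 (cmod z)" using r by auto
  qed auto
  have "((\<lambda>w. f w / (w - z) - f z / (w - z)) has_contour_integral (IR - 2 * pi * \<i> * f z)) (circlepath 0 R)"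
    by (rule has_contour_integral_diff[OF hIR c1])
  then have "(h has_contour_integral (IR - 2 * pi * \<i> * f z)) (circlepath 0 R)"
    by (rule has_contour_integral_eq) (use r in \<open>auto simp: h_def diff_divide_distrib\<close>)
  then have 1: "contour_integral (circlepath 0 R) h = IR - 2 * pi * \<i> * f z"
    by (rule contour_integral_unique)
  have "((\<lambda>w. f w / (w - z) - f z / (w - z)) has_contour_integral (Ir - 0)) (circlepath 0 r)"
    by (rule has_contour_integral_diff[OF hIr c2])
  then have "(h has_contour_integral (Ir - 0)) (circlepath 0 r)"
    by (rule has_contour_integral_eq) (use r in \<open>auto simp: h_def diff_divide_distrib\<close>)
  then have 2: "contour_integral (circlepath 0 r) h = Ir"
    by (simp add: contour_integral_unique)
  have "IR - 2 * pi * \<i> * f z = Ir" using E(3) 1 2 by simp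
  then show ?thesis unfolding IR_def[symmetric] Ir_def[symmetric] by (simp add: algebra_simps)
qed

lemma powi_neg_Suc: "(w::complex) powi (- int n - 1) = 1 / w ^ Suc n"
proof -
  have e: "- int n - 1 = - int (Suc n)" by simp
  have "w powi (- int n - 1) = w powi (- int (Suc n))" by (subst e) (rule refl)
  also have "\<dots> = inverse (w powi int (Suc n))" by (rule power_int_minus)
  also have "w powi int (Suc n) = w ^ Suc n" by (rule power_int_of_nat)
  finally show ?thesis by (simp add: divide_inverse)
qed

lemma geo1:
  fixes w z :: complex assumes "w \<noteq> 0" "w \<noteq> z"
  shows "1 / (w - z) - (\<Sum>n\<le>K. z ^ n * (1 / w ^ Suc n)) = (z / w) ^ Suc K / (w - z)"
proof (induction K)
  case 0
  have "w - z \<noteq> 0" using assms by simp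
  then show ?case using assms by (simp add: field_simps)
next
  case (Suc K)
  have "w - z \<noteq> 0" using assms by simp
  have "1 / (w - z) - (\<Sum>n\<le>Suc K. z ^ n * (1 / w ^ Suc n)) =
        (z / w) ^ Suc K / (w - z) - z ^ Suc K * (1 / w ^ Suc (Suc K))"
    using Suc by (simp add: algebra_simps)
  also have "\<dots> = (z / w) ^ Suc (Suc K) / (w - z)"
    using assms \<open>w - z \<noteq> 0\<close> by (simp add: field_simps power_divide)
  finally show ?case .
qed

lemma geo2:
  fixes w z :: complex assumes "z \<noteq> 0" "w \<noteq> z"
  shows "1 / (w - z) + (\<Sum>m\<le>K. (1 / z ^ Suc m) * w ^ m) = (w / z) ^ Suc K / (w - z)"
proof (induction K)
  case 0
  have "w - z \<noteq> 0" using assms by simp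
  then show ?case using assms by (simp add: field_simps)
next
  case (Suc K)
  have "w - z \<noteq> 0" using assms by simp
  have "1 / (w - z) + (\<Sum>m\<le>Suc K. (1 / z ^ Suc m) * w ^ m) =
        (w / z) ^ Suc K / (w - z) + (1 / z ^ Suc (Suc K)) * w ^ Suc K"
    using Suc by (simp add: algebra_simps)
  also have "\<dots> = (w / z) ^ Suc (Suc K) / (w - z)"
    using assms \<open>w - z \<noteq> 0\<close> by (simp add: field_simps power_divide)
  finally show ?case .
qed

lemma sum_split_int:
  "(\<Sum>n\<in>{- int K - 1..int K}. F n) = (\<Sum>n\<le>K. F (int n)) + (\<Sum>m\<le>K. F (- int m - 1))"
proof (induction K)
  case 0
  have "{- int 0 - 1..int 0} = {-1, 0}" by auto
  then show ?case by (simp add: add.commute)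
next
  case (Suc K)
  have e: "{- int (Suc K) - 1..int (Suc K)} = insert (int K + 1) (insert (- int K - 2) {- int K - 1..int K})"
    by auto
  have "(\<Sum>n\<in>{- int (Suc K) - 1..int (Suc K)}. F n) = F (int K + 1) + (F (- int K - 2) + (\<Sum>n\<in>{- int K - 1..int K}. F n))"
    unfolding e by (simp add: sum.insert)
  also have "\<dots> = (\<Sum>n\<le>Suc K. F (int n)) + (\<Sum>m\<le>Suc K. F (- int m - 1))"
    using Suc by (simp add: algebra_simps)
  finally show ?case .
qed

lemma pw_bound:
  assumes "cmod a \<le> M" "cmod q \<le> 1/2" "d \<le> cmod (w - z)" "d > 0"
  shows "cmod (a * q ^ Suc K / (w - z)) \<le> M * (1/2) ^ Suc K / d"
proof -
  have M0: "M \<ge> 0" using assms(1) norm_ge_zero order_trans by blast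
  have "cmod (a * q ^ Suc K) \<le> M * (1/2) ^ Suc K"
    unfolding norm_mult norm_power
    by (intro mult_mono power_mono) (use assms M0 in auto)
  have "cmod (a * q ^ Suc K) / cmod (w - z) \<le> cmod (a * q ^ Suc K) / d"
    by (rule divide_left_mono) (use assms in \<open>auto intro!: mult_pos_pos\<close>)
  also have "\<dots> \<le> M * (1/2) ^ Suc K / d"
    by (rule divide_right_mono) (use \<open>cmod (a * q ^ Suc K) \<le> M * (1/2) ^ Suc K\<close> assms in auto)
  finally have "cmod (a * q ^ Suc K) / cmod (w - z) \<le> M * (1/2) ^ Suc K / d" .
  then show ?thesis by (simp add: norm_divide)
qed

lemma tail:
  assumes f: "f \<in> OC" and r: "r > 0"
    and Mr: "\<And>w. cmod w = r \<Longrightarrow> cmod (f w) \<le> M"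
    and MR: "\<And>w. cmod w = R \<Longrightarrow> cmod (f w) \<le> M"
    and z: "2 * r \<le> cmod z" "cmod z \<le> R / 2"
  shows "cmod (f z - (\<Sum>n\<in>{- int K - 1..int K}. lc f n * z powi n)) \<le> 3 * M * (1/2) ^ Suc K"
proof -
  have zr: "r < cmod z" and zR: "cmod z < R" and R0: "R > 0" and z0: "z \<noteq> 0" using r z by auto
  define c where "c = 2 * pi * \<i>"
  have c0: "c \<noteq> 0" by (simp add: c_def)
  define IR where "IR = contour_integral (circlepath 0 R) (\<lambda>w. f w / (w - z))"
  define Ir where "Ir = contour_integral (circlepath 0 r) (\<lambda>w. f w / (w - z))"
  have hIR: "((\<lambda>w. f w / (w - z)) has_contour_integral IR) (circlepath 0 R)"
    unfolding IR_def by (rule has_contour_integral_integral[OF cint_circ[OF f R0]]) (use zR in simp)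
  have hIr: "((\<lambda>w. f w / (w - z)) has_contour_integral Ir) (circlepath 0 r)"
    unfolding Ir_def by (rule has_contour_integral_integral[OF cint_circ[OF f r]]) (use zr in simp)
  have cau: "c * f z = IR - Ir" unfolding c_def IR_def Ir_def by (rule cauchy_annulus[OF f r zr zR])
  define SR where "SR = (\<Sum>n\<le>K. z ^ n * (c * lc f (int n)))"
  define Sr where "Sr = (\<Sum>m\<le>K. (1 / z ^ Suc m) * (c * lc f (- int m - 1)))"
  have hSR: "((\<lambda>w. \<Sum>n\<le>K. z ^ n * (f w * w powi (- int n - 1))) has_contour_integral SR) (circlepath 0 R)"
    unfolding SR_def c_def
    by (intro has_contour_integral_sum has_contour_integral_lmul lc_radius[OF f R0]) auto
  have hSr: "((\<lambda>w. \<Sum>m\<le>K. (1 / z ^ Suc m) * (f w * w powi (- (- int m - 1) - 1))) has_contour_integral Sr) (circlepath 0 r)"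
    unfolding Sr_def c_def
    by (intro has_contour_integral_sum has_contour_integral_lmul lc_radius[OF f r]) auto
  have dR: "((\<lambda>w. f w / (w - z) - (\<Sum>n\<le>K. z ^ n * (f w * w powi (- int n - 1)))) has_contour_integral (IR - SR)) (circlepath 0 R)"
    by (rule has_contour_integral_diff[OF hIR hSR])
  have dr: "((\<lambda>w. f w / (w - z) + (\<Sum>m\<le>K. (1 / z ^ Suc m) * (f w * w powi (- (- int m - 1) - 1)))) has_contour_integral (Ir + Sr)) (circlepath 0 r)"
    by (rule has_contour_integral_add[OF hIr hSr])
  have bR: "cmod (IR - SR) \<le> (M * (1/2) ^ Suc K / (R/2)) * (2 * pi * R)"
  proof (rule has_contour_integral_bound_circlepath[OF dR])
    have "M \<ge> 0" using MR[of "of_real R"] R0 by (smt (verit) norm_ge_zero norm_of_real)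
    then show "0 \<le> M * (1/2) ^ Suc K / (R/2)" using R0 by simp
    fix w :: complex assume "cmod (w - 0) = R"
    then have w: "cmod w = R" by simp
    then have w0: "w \<noteq> 0" and wz: "w \<noteq> z" using R0 zR by auto
    have "f w / (w - z) - (\<Sum>n\<le>K. z ^ n * (f w * w powi (- int n - 1)))
        = f w * (1 / (w - z) - (\<Sum>n\<le>K. z ^ n * (1 / w ^ Suc n)))"
      by (simp add: powi_neg_Suc sum_distrib_left algebra_simps)
    also have "\<dots> = f w * (z / w) ^ Suc K / (w - z)" using geo1[OF w0 wz, of K] by simp
    finally have eq: "f w / (w - z) - (\<Sum>n\<le>K. z ^ n * (f w * w powi (- int n - 1))) = f w * (z / w) ^ Suc K / (w - z)" .
    have q: "cmod (z / w) \<le> 1/2" using w z R0 by (simp add: norm_divide field_simps)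
    have d: "R / 2 \<le> cmod (w - z)" using w z norm_triangle_ineq2[of w z] by simp
    show "cmod (f w / (w - z) - (\<Sum>n\<le>K. z ^ n * (f w * w powi (- int n - 1)))) \<le> M * (1/2) ^ Suc K / (R/2)"
      unfolding eq by (rule pw_bound[OF MR[OF w] q d]) (use R0 in simp)
  qed (use R0 in auto)
  have br: "cmod (Ir + Sr) \<le> (M * (1/2) ^ Suc K / r) * (2 * pi * r)"
  proof (rule has_contour_integral_bound_circlepath[OF dr])
    have "M \<ge> 0" using Mr[of "of_real r"] r by (smt (verit) norm_ge_zero norm_of_real)
    then show "0 \<le> M * (1/2) ^ Suc K / r" using r by simp
    fix w :: complex assume "cmod (w - 0) = r"
    then have w: "cmod w = r" by simp
    then have wz: "w \<noteq> z" using zr by auto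
    have "f w / (w - z) + (\<Sum>m\<le>K. (1 / z ^ Suc m) * (f w * w powi (- (- int m - 1) - 1)))
        = f w * (1 / (w - z) + (\<Sum>m\<le>K. (1 / z ^ Suc m) * w ^ m))"
      by (simp add: sum_distrib_left algebra_simps)
    also have "\<dots> = f w * (w / z) ^ Suc K / (w - z)" using geo2[OF z0 wz, of K] by simp
    finally have eq: "f w / (w - z) + (\<Sum>m\<le>K. (1 / z ^ Suc m) * (f w * w powi (- (- int m - 1) - 1))) = f w * (w / z) ^ Suc K / (w - z)" .
    have q: "cmod (w / z) \<le> 1/2" using w z r z0 by (simp add: norm_divide field_simps)
    have d: "r \<le> cmod (w - z)" using w z norm_triangle_ineq2[of z w] by (simp add: norm_minus_commute)
    show "cmod (f w / (w - z) + (\<Sum>m\<le>K. (1 / z ^ Suc m) * (f w * w powi (- (- int m - 1) - 1)))) \<le> M * (1/2) ^ Suc K / r"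
      unfolding eq by (rule pw_bound[OF Mr[OF w] q d r])
  qed (use r in auto)
  have S: "c * (\<Sum>n\<in>{- int K - 1..int K}. lc f n * z powi n) = SR + Sr"
    unfolding sum_split_int SR_def Sr_def
    by (simp add: sum_distrib_left powi_neg_Suc algebra_simps)
  have "c * (f z - (\<Sum>n\<in>{- int K - 1..int K}. lc f n * z powi n)) = (IR - SR) - (Ir + Sr)"
    using cau S by (simp add: algebra_simps)
  then have "cmod c * cmod (f z - (\<Sum>n\<in>{- int K - 1..int K}. lc f n * z powi n)) \<le> cmod (IR - SR) + cmod (Ir + Sr)"
    by (metis norm_mult norm_triangle_ineq4)
  also have "\<dots> \<le> (M * (1/2) ^ Suc K / (R/2)) * (2 * pi * R) + (M * (1/2) ^ Suc K / r) * (2 * pi * r)"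
    using bR br by simp
  also have "\<dots> = (2 * pi) * (3 * M * (1/2) ^ Suc K)" using R0 r by (simp add: field_simps)
  finally show ?thesis unfolding c_def by (simp add: norm_mult)
qed



lemma cm_cmult: "continuous_map X euclidean f \<Longrightarrow> continuous_map X euclidean (\<lambda>x. (c::complex) * f x)"
  by (simp add: continuous_map_atin tendsto_mult_left)

lemma annulus_of_compact:
  assumes "compact K" "K \<subseteq> - {0}"
  shows "\<exists>r R. r > 0 \<and> R > 0 \<and> (\<forall>z\<in>K. 2 * r \<le> cmod z \<and> cmod z \<le> R / 2)"
proof (cases "K = {}")
  case True then show ?thesis by (intro exI[of _ 1]) auto
next
  case False
  obtain x where x: "x \<in> K" "\<forall>y\<in>K. cmod x \<le> cmod y"
    using continuous_attains_inf[OF assms(1) False, of norm] by (auto intro: continuous_intros)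
  have x0: "cmod x > 0" using x assms(2) by auto
  obtain b where b: "\<forall>y\<in>K. cmod y \<le> b" using compact_imp_bounded[OF assms(1)] bounded_iff by metis
  show ?thesis
  proof (rule exI[of _ "cmod x / 2"], rule exI[of _ "2 * b"], intro conjI ballI)
    have "cmod x \<le> b" using b x(1) by blast
    then show "0 < 2 * b" using x0 by linarith
  qed (use x x0 b in auto)
qed

lemma small_le_zero:
  fixes x D :: real
  assumes "\<And>k. k \<ge> k0 \<Longrightarrow> x \<le> D * (1/2) ^ Suc k"
  shows "x \<le> 0"
proof (rule ccontr)
  assume "\<not> x \<le> 0"
  then have x: "x > 0" by simp
  obtain n where n: "(1/2::real) ^ n < x / (\<bar>D\<bar> + 1)"
    using real_arch_pow_inv[of "x / (\<bar>D\<bar> + 1)" "1/2"] x by auto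
  define k where "k = max k0 n"
  have "(1/2::real) ^ Suc k \<le> (1/2) ^ n"
    by (rule power_decreasing) (auto simp: k_def)
  also note n
  finally have "(1/2::real) ^ Suc k < x / (\<bar>D\<bar> + 1)" .
  then have A: "(\<bar>D\<bar> + 1) * (1/2::real) ^ Suc k < x" by (simp add: field_simps)
  define q where "q = (1/2::real) ^ Suc k"
  have q0: "q \<ge> 0" by (simp add: q_def)
  have B: "D * q \<le> (\<bar>D\<bar> + 1) * q" by (rule mult_right_mono) (use q0 in auto)
  have Cc: "x \<le> D * q" using assms[of k] by (simp add: k_def q_def)
  show False using A B Cc unfolding q_def by linarith
qed

lemma approx_main:
  assumes lin: "islin \<alpha>" and C: "C \<ge> 0"
    and bd: "\<And>g t. g \<in> OC \<Longrightarrow> t \<ge> 0 \<Longrightarrow> (\<forall>z\<in>K. cmod (g z) \<le> t) \<Longrightarrow> cmod (\<alpha> g) \<le> C * t"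
    and r: "r > 0" and rR: "\<forall>z\<in>K. 2 * r \<le> cmod z \<and> cmod z \<le> R / 2"
    and f: "f \<in> OC" and Mr: "\<forall>w. cmod w = r \<longrightarrow> cmod (f w) \<le> M"
    and MR: "\<forall>w. cmod w = R \<longrightarrow> cmod (f w) \<le> M"
  shows "cmod (\<alpha> f - (\<Sum>n\<in>{- int k - 1..int k}. lc f n * coef \<alpha> n)) \<le> C * (3 * M * (1/2) ^ Suc k)"
proof -
  have M0: "M \<ge> 0" using Mr r by (metis abs_of_pos norm_ge_zero norm_of_real order_trans)
  define S where "S = (\<lambda>x. \<Sum>n\<in>{- int k - 1..int k}. lc f n * x powi n)"
  have SOC: "S \<in> OC" unfolding S_def by (intro OC_sum OC_cmult OC_powi)
  have aS: "\<alpha> S = (\<Sum>n\<in>{- int k - 1..int k}. lc f n * coef \<alpha> n)"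
  proof -
    have "\<alpha> S = (\<Sum>n\<in>{- int k - 1..int k}. \<alpha> (\<lambda>x. lc f n * x powi n))"
      unfolding S_def using islin_sum[OF lin, of "{- int k - 1..int k}" "\<lambda>n x. lc f n * x powi n"]
      by (simp add: OC_cmult)
    also have "\<dots> = (\<Sum>n\<in>{- int k - 1..int k}. lc f n * coef \<alpha> n)"
      by (intro sum.cong refl) (simp add: islin_cmult[OF lin OC_powi] coef_def)
    finally show ?thesis .
  qed
  have "cmod (\<alpha> (\<lambda>x. f x - S x)) \<le> C * (3 * M * (1/2) ^ Suc k)"
  proof (rule bd[OF OC_diff[OF f SOC]])
    show "0 \<le> 3 * M * (1/2::real) ^ Suc k" using M0 by simp
    show "\<forall>z\<in>K. cmod (f z - S z) \<le> 3 * M * (1/2) ^ Suc k"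
      unfolding S_def using tail[OF f r] Mr MR rR by blast
  qed
  then show ?thesis using islin_diff[OF lin f SOC] aS by simp
qed

lemma approx:
  assumes lin: "islin \<alpha>" and K: "compact K" "K \<subseteq> - {0}" and C: "C \<ge> 0"
    and bd: "\<And>g t. g \<in> OC \<Longrightarrow> t \<ge> 0 \<Longrightarrow> (\<forall>z\<in>K. cmod (g z) \<le> t) \<Longrightarrow> cmod (\<alpha> g) \<le> C * t"
  shows "\<exists>r R. r > 0 \<and> R > 0 \<and> (\<forall>f M k. f \<in> OC \<longrightarrow> (\<forall>w. cmod w = r \<longrightarrow> cmod (f w) \<le> M) \<longrightarrow>
        (\<forall>w. cmod w = R \<longrightarrow> cmod (f w) \<le> M) \<longrightarrow>
        cmod (\<alpha> f - (\<Sum>n\<in>{- int k - 1..int k}. lc f n * coef \<alpha> n)) \<le> C * (3 * M * (1/2) ^ Suc k))"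
proof -
  obtain r R where rR: "r > 0" "R > 0" "\<forall>z\<in>K. 2 * r \<le> cmod z \<and> cmod z \<le> R / 2"
    using annulus_of_compact[OF K] by blast
  show ?thesis
    using approx_main[OF lin C bd rR(1) rR(3)] rR(1,2) by blast
qed



lemma c2pi_nz: "2 * complex_of_real pi * \<i> \<noteq> 0" by simp

lemma lc_add: assumes f: "f \<in> OC" and g: "g \<in> OC"
  shows "lc (\<lambda>x. f x + g x) n = lc f n + lc g n"
proof -
  have r: "(1::real) > 0" by simp
  have "((\<lambda>w. f w * w powi (- n - 1) + g w * w powi (- n - 1)) has_contour_integral
          (2 * pi * \<i> * lc f n + 2 * pi * \<i> * lc g n)) (circlepath 0 1)"
    by (rule has_contour_integral_add[OF lc_radius[OF f r] lc_radius[OF g r]])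
  then have "((\<lambda>w. (f w + g w) * w powi (- n - 1)) has_contour_integral
          (2 * pi * \<i> * (lc f n + lc g n))) (circlepath 0 1)"
    by (simp add: algebra_simps)
  moreover have "((\<lambda>w. (f w + g w) * w powi (- n - 1)) has_contour_integral
          (2 * pi * \<i> * lc (\<lambda>x. f x + g x) n)) (circlepath 0 1)"
    using lc_radius[OF OC_add[OF f g] r] by simp
  ultimately have "2 * pi * \<i> * lc (\<lambda>x. f x + g x) n = 2 * pi * \<i> * (lc f n + lc g n)"
    using has_contour_integral_unique by blast
  then show ?thesis by simp
qed

lemma lc_cmult: assumes f: "f \<in> OC"
  shows "lc (\<lambda>x. c * f x) n = c * lc f n"
proof -
  have r: "(1::real) > 0" by simp
  have "((\<lambda>w. c * (f w * w powi (- n - 1))) has_contour_integral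
          (c * (2 * pi * \<i> * lc f n))) (circlepath 0 1)"
    by (rule has_contour_integral_lmul[OF lc_radius[OF f r]])
  then have "((\<lambda>w. (c * f w) * w powi (- n - 1)) has_contour_integral
          (2 * pi * \<i> * (c * lc f n))) (circlepath 0 1)"
    by (simp add: algebra_simps)
  moreover have "((\<lambda>w. (c * f w) * w powi (- n - 1)) has_contour_integral
          (2 * pi * \<i> * lc (\<lambda>x. c * f x) n)) (circlepath 0 1)"
    using lc_radius[OF OC_cmult[OF f] r] by simp
  ultimately have "2 * pi * \<i> * lc (\<lambda>x. c * f x) n = 2 * pi * \<i> * (c * lc f n)"
    using has_contour_integral_unique by blast
  then show ?thesis by simp
qed

lemma lc_cong: assumes "\<And>w. cmod w = 1 \<Longrightarrow> f w = g w" shows "lc f n = lc g n"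
  unfolding lc_def by (subst contour_integral_eq[where g = "\<lambda>w. g w * w powi (- n - 1)"]) (auto simp: assms)

lemma lc_powi: "lc (\<lambda>x. x powi m) n = (if m = n then 1 else 0)"
proof -
  have eq: "w powi m * w powi (- n - 1) = w powi (m - n - 1)" if "w \<noteq> 0" for w :: complex
    using power_int_add[of w m "- n - 1"] that by (simp add: algebra_simps)
  have "contour_integral (circlepath 0 1) (\<lambda>w. w powi m * w powi (- n - 1))
      = contour_integral (circlepath 0 1) (\<lambda>w. w powi (m - n - 1))"
    by (rule contour_integral_eq) (auto intro!: eq)
  also have "\<dots> = (if m = n then 2 * pi * \<i> else 0)"
  proof (cases "m = n")
    case True
    have "contour_integral (circlepath 0 1) (\<lambda>w. w powi (m - n - 1)) = contour_integral (circlepath 0 1) (\<lambda>w. 1 / (w - 0))"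
      by (rule contour_integral_eq) (simp add: True power_int_minus divide_inverse)
    also have "\<dots> = 2 * pi * \<i>" using contour_integral_circlepath[of 1 0] by simp
    finally show ?thesis using True by simp
  next
    case False
    define k where "k = m - n"
    have k0: "k \<noteq> 0" using False by (simp add: k_def)
    have "((\<lambda>w. w powi (k - 1)) has_contour_integral 0) (circlepath 0 1)"
    proof (rule Cauchy_theorem_primitive[where S = "- {0}" and f = "\<lambda>w. w powi k / of_int k"])
      fix x :: complex assume "x \<in> - {0}"
      then have x: "x \<noteq> 0" by simp
      have "((\<lambda>w. w powi k) has_field_derivative (of_int k * x powi (k - 1) * 1)) (at x within - {0})"
        by (rule DERIV_power_int) (auto simp: x intro: derivative_eq_intros)
      then have "((\<lambda>w. w powi k / of_int k) has_field_derivative (of_int k * x powi (k - 1) * 1) / of_int k) (at x within - {0})"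
        by (rule DERIV_cdivide)
      then show "((\<lambda>w. w powi k / of_int k) has_field_derivative x powi (k - 1)) (at x within - {0})"
        using k0 by simp
    qed auto
    then show ?thesis using False by (simp add: k_def contour_integral_unique)
  qed
  finally show ?thesis unfolding lc_def by simp
qed

definition eps :: "int \<Rightarrow> (complex \<Rightarrow> complex) \<Rightarrow> complex" where
  "eps n f = (if f \<in> OC then lc f n else 0)"

lemma eps_islin: "islin (eps n)"
  unfolding islin_def
proof (intro conjI ballI allI)
  fix f g assume f: "f \<in> OC" and g: "g \<in> OC"
  show "eps n (\<lambda>x. f x + g x) = eps n f + eps n g"
    using f g OC_add[OF f g] lc_add[OF f g] unfolding eps_def by simp
next
  fix c f assume f: "f \<in> OC"
  show "eps n (\<lambda>x. c * f x) = c * eps n f"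
    using f OC_cmult[OF f] lc_cmult[OF f] unfolding eps_def by simp
qed

lemma eps_bound: "g \<in> OC \<Longrightarrow> t \<ge> 0 \<Longrightarrow> (\<forall>z\<in>sphere 0 1. cmod (g z) \<le> t) \<Longrightarrow> cmod (eps n g) \<le> 1 * t"
  unfolding eps_def using lc_bound[of g 1 t n] by simp

lemma eps_OCdual: "eps n \<in> OCdual"
proof -
  have "continuous_map OC_top euclidean (eps n)"
    by (rule lin_bound_cont[OF eps_islin _ _ _ eps_bound]) auto
  then show ?thesis using eps_islin unfolding OCdual_def islin_def by (auto simp: eps_def)
qed

lemma coef_eps: "coef (eps n) m = (if m = n then 1 else 0)"
  by (simp add: coef_def eps_def lc_powi)



lemma sc_value:
  assumes u: "u \<in> OC" and s: "s \<noteq> 0"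
  shows "eps n (\<lambda>t. u (s * t)) = lc u n * s powi n"
proof -
  define \<beta> where "\<beta> = (\<lambda>v. eps n (\<lambda>t. v (s * t)))"
  have lin: "islin \<beta>"
    unfolding islin_def \<beta>_def
  proof (intro conjI ballI allI)
    fix f g assume f: "f \<in> OC" and g: "g \<in> OC"
    show "eps n (\<lambda>t. f (s * t) + g (s * t)) = eps n (\<lambda>t. f (s * t)) + eps n (\<lambda>t. g (s * t))"
      by (rule islin_add[OF eps_islin OC_scale[OF f] OC_scale[OF g]])
  next
    fix c f assume f: "f \<in> OC"
    show "eps n (\<lambda>t. c * f (s * t)) = c * eps n (\<lambda>t. f (s * t))"
      by (rule islin_cmult[OF eps_islin OC_scale[OF f]])
  qed
  have bd: "cmod (\<beta> g) \<le> 1 * t" if g: "g \<in> OC" "t \<ge> 0" "\<forall>z\<in>sphere 0 (cmod s). cmod (g z) \<le> t" for g t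
    unfolding \<beta>_def
  proof (rule eps_bound[OF OC_scale[OF g(1)] g(2)])
    show "\<forall>z\<in>sphere 0 1. cmod (g (s * z)) \<le> t"
      using g(3) by (auto simp: norm_mult)
  qed
  have K: "compact (sphere (0::complex) (cmod s))" "sphere (0::complex) (cmod s) \<subseteq> - {0}"
    using s by auto
  obtain r R where rR: "r > 0" "R > 0" and ap: "\<forall>f M k. f \<in> OC \<longrightarrow> (\<forall>w. cmod w = r \<longrightarrow> cmod (f w) \<le> M) \<longrightarrow>
        (\<forall>w. cmod w = R \<longrightarrow> cmod (f w) \<le> M) \<longrightarrow>
        cmod (\<beta> f - (\<Sum>n\<in>{- int k - 1..int k}. lc f n * coef \<beta> n)) \<le> 1 * (3 * M * (1/2) ^ Suc k)"
  proof -
    have "(0::real) \<le> 1" by simp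
    from approx[OF lin K this bd] show ?thesis using that by blast
  qed
  have "compact (sphere (0::complex) r \<union> sphere 0 R)" by (simp add: compact_Un)
  moreover have "sphere (0::complex) r \<union> sphere 0 R \<subseteq> - {0}" using rR by auto
  ultimately obtain b where b: "\<forall>z\<in>sphere 0 r \<union> sphere 0 R. cmod (u z) \<le> b"
    using OC_bounded[OF u] by blast
  have br: "\<And>w. cmod w = r \<Longrightarrow> cmod (u w) \<le> b" using b by simp
  have bR: "\<And>w. cmod w = R \<Longrightarrow> cmod (u w) \<le> b" using b by simp
  have coefb: "coef \<beta> m = s powi m * (if m = n then 1 else 0)" for m
  proof -
    have "coef \<beta> m = eps n (\<lambda>t. s powi m * t powi m)"
      by (simp add: coef_def \<beta>_def power_int_mult_distrib)
    also have "\<dots> = s powi m * eps n (\<lambda>t. t powi m)"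
      by (rule islin_cmult[OF eps_islin OC_powi])
    also have "eps n (\<lambda>t. t powi m) = (if m = n then 1 else 0)"
      using coef_eps[of n m] by (simp add: coef_def)
    finally show ?thesis .
  qed
  have "cmod (\<beta> u - lc u n * s powi n) \<le> 3 * b * (1/2) ^ Suc k" if k: "k \<ge> nat \<bar>n\<bar>" for k
  proof -
    have nk: "n \<in> {- int k - 1..int k}" using k by auto
    have "(\<Sum>m\<in>{- int k - 1..int k}. lc u m * coef \<beta> m)
        = (\<Sum>m\<in>{- int k - 1..int k}. if m = n then lc u m * s powi m else 0)"
      by (intro sum.cong refl) (simp add: coefb)
    also have "\<dots> = lc u n * s powi n" using nk by simp
    finally have eq: "(\<Sum>m\<in>{- int k - 1..int k}. lc u m * coef \<beta> m) = lc u n * s powi n" .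
    have "cmod (\<beta> u - (\<Sum>m\<in>{- int k - 1..int k}. lc u m * coef \<beta> m)) \<le> 1 * (3 * b * (1/2) ^ Suc k)"
      using ap[rule_format, OF u br bR] .
    then show ?thesis unfolding eq by simp
  qed
  then have "cmod (\<beta> u - lc u n * s powi n) \<le> 0"
    by (intro small_le_zero[of "nat \<bar>n\<bar>"]) auto
  then show ?thesis unfolding \<beta>_def by simp
qed

lemma eps_idem: "conv (eps n) (eps n) = eps n"
proof
  fix u
  show "conv (eps n) (eps n) u = eps n u"
  proof (cases "u \<in> OC")
    case False then show ?thesis by (simp add: conv_def eps_def)
  next
    case u: True
    define G where "G = (\<lambda>s. eps n (\<lambda>t. u (s * t)))"
    have Gv: "G s = lc u n * s powi n" if "s \<noteq> 0" for s
      unfolding G_def by (rule sc_value[OF u that])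
    have "(\<lambda>s. lc u n * s powi n) holomorphic_on (- {0})"
      by (intro holomorphic_intros) auto
    then have "G holomorphic_on (- {0})"
      by (rule holomorphic_transform) (simp add: Gv)
    then have GOC: "G \<in> OC" by (simp add: OC_def)
    have "eps n G = lc G n" by (simp add: eps_def GOC)
    also have "\<dots> = lc (\<lambda>s. lc u n * s powi n) n"
      by (rule lc_cong) (auto intro!: Gv)
    also have "\<dots> = lc u n * lc (\<lambda>s. s powi n) n" by (rule lc_cmult[OF OC_powi])
    also have "\<dots> = lc u n" by (simp add: lc_powi)
    finally show ?thesis using u by (simp add: conv_def eps_def G_def)
  qed
qed



lemma coef_dadd: "coef (dadd \<alpha> \<beta>) n = coef \<alpha> n + coef \<beta> n"
  by (simp add: coef_def dadd_def)

lemma coef_dscale: "coef (dscale c \<alpha>) n = c * coef \<alpha> n"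
  by (simp add: coef_def dscale_def)

lemma coef_conv: assumes a: "\<alpha> \<in> OCdual" and b: "\<beta> \<in> OCdual"
  shows "coef (conv \<alpha> \<beta>) n = coef \<alpha> n * coef \<beta> n"
proof -
  have la: "islin \<alpha>" and lb: "islin \<beta>" using a b by (auto intro: OCdual_islin)
  have "\<beta> (\<lambda>t. (s * t) powi n) = s powi n * coef \<beta> n" for s
  proof -
    have "\<beta> (\<lambda>t. (s * t) powi n) = \<beta> (\<lambda>t. s powi n * t powi n)" by (simp add: power_int_mult_distrib)
    also have "\<dots> = s powi n * coef \<beta> n" unfolding coef_def by (rule islin_cmult[OF lb OC_powi])
    finally show ?thesis .
  qed
  then have "coef (conv \<alpha> \<beta>) n = \<alpha> (\<lambda>s. coef \<beta> n * s powi n)"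
    by (simp add: conv_def coef_def mult.commute)
  also have "\<dots> = coef \<beta> n * coef \<alpha> n" unfolding coef_def by (rule islin_cmult[OF la OC_powi])
  finally show ?thesis by simp
qed

lemma sum_prod_le:
  fixes a b :: "int \<Rightarrow> real"
  assumes "finite I" "\<And>i. a i \<ge> 0" "\<And>i. b i \<ge> 0"
  shows "(\<Sum>i\<in>I. a i * b i) \<le> (\<Sum>i\<in>I. a i) * (\<Sum>i\<in>I. b i)"
proof -
  have "(\<Sum>i\<in>I. a i * b i) \<le> (\<Sum>i\<in>I. a i * (\<Sum>j\<in>I. b j))"
  proof (rule sum_mono)
    fix i assume "i \<in> I"
    then have "b i \<le> (\<Sum>j\<in>I. b j)" using member_le_sum[of i I b] assms by simp
    then show "a i * b i \<le> a i * (\<Sum>j\<in>I. b j)" using assms(2) by (rule mult_left_mono) 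
  qed
  also have "\<dots> = (\<Sum>i\<in>I. a i) * (\<Sum>i\<in>I. b i)" by (simp add: sum_distrib_right)
  finally show ?thesis .
qed

lemma normN_seminorm: "dual_seminorm (normN N)"
  unfolding dual_seminorm_def
proof (intro conjI ballI allI)
  fix \<alpha> show "normN N \<alpha> \<ge> 0" unfolding normN_def by (simp add: sum_nonneg)
next
  fix \<alpha> \<beta>
  show "normN N (dadd \<alpha> \<beta>) \<le> normN N \<alpha> + normN N \<beta>"
    unfolding normN_def coef_dadd sum.distrib[symmetric]
    by (rule sum_mono) (rule norm_triangle_ineq)
next
  fix c \<alpha>
  show "normN N (dscale c \<alpha>) = cmod c * normN N \<alpha>"
    unfolding normN_def coef_dscale by (simp add: norm_mult sum_distrib_left)
qed

lemma normN_submult: "submultiplicative (normN N)"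
  unfolding submultiplicative_def
proof (intro ballI)
  fix \<alpha> \<beta> assume a: "\<alpha> \<in> OCdual" and b: "\<beta> \<in> OCdual"
  show "normN N (conv \<alpha> \<beta>) \<le> normN N \<alpha> * normN N \<beta>"
    unfolding normN_def coef_conv[OF a b] norm_mult
    by (rule sum_prod_le) auto
qed

lemma normN_cont: "cont_seminorm (normN N)"
  unfolding cont_seminorm_def continuous_map_def
proof (intro conjI allI impI)
  show "normN N \<in> topspace OCdual_top \<rightarrow> topspace euclideanreal" by simp
  fix U :: "real set" assume "openin euclideanreal U"
  then have oU: "open U" by simp
  show "openin OCdual_top {x \<in> topspace OCdual_top. normN N x \<in> U}"
    unfolding openin_OCdual_top topspace_OCdual_top
  proof (intro conjI ballI)
    show "{x \<in> OCdual. normN N x \<in> U} \<subseteq> OCdual" by blast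
    fix \<alpha> assume a: "\<alpha> \<in> {x \<in> OCdual. normN N x \<in> U}"
    then obtain \<epsilon> where \<epsilon>: "\<epsilon> > 0" "ball (normN N \<alpha>) \<epsilon> \<subseteq> U" using oU open_contains_ball by blast
    define B where "B = (\<lambda>n (x::complex). x powi n) ` {- int N..int N}"
    have BOC: "B \<subseteq> topspace OC_top" by (auto simp: B_def topspace_OC_top)
    have cB: "compactin OC_top B" by (rule finite_imp_compactin[OF BOC]) (simp add: B_def)
    define e where "e = \<epsilon> / (2 * real N + 2)"
    have e: "e > 0" using \<epsilon> by (simp add: e_def)
    have "{\<beta> \<in> OCdual. \<forall>f\<in>B. cmod (\<beta> f - \<alpha> f) \<le> e} \<subseteq> {x \<in> OCdual. normN N x \<in> U}"
    proof
      fix \<beta> assume b: "\<beta> \<in> {\<beta> \<in> OCdual. \<forall>f\<in>B. cmod (\<beta> f - \<alpha> f) \<le> e}"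
      have cb: "cmod (coef \<beta> n - coef \<alpha> n) \<le> e" if "n \<in> {- int N..int N}" for n
        using b that unfolding coef_def B_def by blast
      have "\<bar>normN N \<beta> - normN N \<alpha>\<bar> = \<bar>\<Sum>n\<in>{- int N..int N}. cmod (coef \<beta> n) - cmod (coef \<alpha> n)\<bar>"
        unfolding normN_def by (simp add: sum_subtractf)
      also have "\<dots> \<le> (\<Sum>n\<in>{- int N..int N}. \<bar>cmod (coef \<beta> n) - cmod (coef \<alpha> n)\<bar>)"
        by (rule sum_abs)
      also have "\<dots> \<le> (\<Sum>n\<in>{- int N..int N}. e)"
        by (rule sum_mono) (use cb norm_triangle_ineq3 order_trans in blast)
      also have "\<dots> = (2 * real N + 1) * e" by simp
      also have "\<dots> < \<epsilon>" using \<epsilon> e by (simp add: e_def field_simps)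
      finally have "normN N \<beta> \<in> ball (normN N \<alpha>) \<epsilon>" by (simp add: dist_real_def abs_minus_commute)
      then show "\<beta> \<in> {x \<in> OCdual. normN N x \<in> U}" using b \<epsilon>(2) by blast
    qed
    then show "\<exists>B e. compactin OC_top B \<and> e > 0 \<and>
        {\<beta> \<in> OCdual. \<forall>f\<in>B. cmod (\<beta> f - \<alpha> f) \<le> e} \<subseteq> {x \<in> OCdual. normN N x \<in> U}"
      using cB e by blast
  qed
qed



definition Zf :: "(complex \<Rightarrow> complex) \<Rightarrow> complex" where "Zf = (\<lambda>f. 0)"

lemma Zf_OCdual: "Zf \<in> OCdual"
  unfolding OCdual_def Zf_def by simp

lemma OCdual_dadd: assumes "\<alpha> \<in> OCdual" "\<beta> \<in> OCdual" shows "dadd \<alpha> \<beta> \<in> OCdual"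
proof -
  have la: "islin \<alpha>" and lb: "islin \<beta>" using assms by (auto intro: OCdual_islin)
  have ca: "continuous_map OC_top euclidean \<alpha>" and cb: "continuous_map OC_top euclidean \<beta>"
    using assms by (auto simp: OCdual_def)
  have "continuous_map OC_top euclidean (\<lambda>f. \<alpha> f + \<beta> f)" by (rule continuous_map_add[OF ca cb])
  moreover have "\<forall>f\<in>OC. \<forall>g\<in>OC. dadd \<alpha> \<beta> (\<lambda>x. f x + g x) = dadd \<alpha> \<beta> f + dadd \<alpha> \<beta> g"
    by (simp add: dadd_def islin_add[OF la] islin_add[OF lb])
  moreover have "\<forall>c. \<forall>f\<in>OC. dadd \<alpha> \<beta> (\<lambda>x. c * f x) = c * dadd \<alpha> \<beta> f"
    by (simp add: dadd_def islin_cmult[OF la] islin_cmult[OF lb] algebra_simps)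
  moreover have "\<forall>f. f \<notin> OC \<longrightarrow> dadd \<alpha> \<beta> f = 0" using assms by (simp add: dadd_def OCdual_def)
  ultimately show ?thesis unfolding OCdual_def by (simp add: dadd_def)
qed

lemma OCdual_dscale: assumes "\<alpha> \<in> OCdual" shows "dscale c \<alpha> \<in> OCdual"
proof -
  have la: "islin \<alpha>" using assms by (auto intro: OCdual_islin)
  have ca: "continuous_map OC_top euclidean \<alpha>" using assms by (auto simp: OCdual_def)
  have "continuous_map OC_top euclidean (\<lambda>f. c * \<alpha> f)" by (rule cm_cmult[OF ca])
  moreover have "\<forall>f\<in>OC. \<forall>g\<in>OC. dscale c \<alpha> (\<lambda>x. f x + g x) = dscale c \<alpha> f + dscale c \<alpha> g"
    by (simp add: dscale_def islin_add[OF la] algebra_simps)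
  moreover have "\<forall>d. \<forall>f\<in>OC. dscale c \<alpha> (\<lambda>x. d * f x) = d * dscale c \<alpha> f"
    by (simp add: dscale_def islin_cmult[OF la] algebra_simps)
  moreover have "\<forall>f. f \<notin> OC \<longrightarrow> dscale c \<alpha> f = 0" using assms by (simp add: dscale_def OCdual_def)
  ultimately show ?thesis unfolding OCdual_def by (simp add: dscale_def)
qed

lemma OCdual_lincomb:
  assumes "finite I" "\<And>i. i \<in> I \<Longrightarrow> \<phi> i \<in> OCdual"
  shows "(\<lambda>f. \<Sum>i\<in>I. c i * \<phi> i f) \<in> OCdual"
  using assms
proof (induction I rule: finite_induct)
  case empty then show ?case using Zf_OCdual by (simp add: Zf_def)
next
  case (insert i I)
  have "(\<lambda>f. \<Sum>j\<in>insert i I. c j * \<phi> j f) = dadd (dscale (c i) (\<phi> i)) (\<lambda>f. \<Sum>j\<in>I. c j * \<phi> j f)"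
    using insert by (simp add: dadd_def dscale_def)
  moreover have "dadd (dscale (c i) (\<phi> i)) (\<lambda>f. \<Sum>j\<in>I. c j * \<phi> j f) \<in> OCdual"
    using insert by (intro OCdual_dadd OCdual_dscale) auto
  ultimately show ?case by simp
qed

lemma p_Zf: assumes "dual_seminorm p" shows "p Zf = 0"
proof -
  have "dscale 0 Zf = Zf" by (simp add: dscale_def Zf_def)
  then show ?thesis using assms Zf_OCdual unfolding dual_seminorm_def by (metis mult_zero_left norm_zero)
qed

lemma p_lincomb:
  assumes p: "dual_seminorm p" and "finite I" "\<And>i. i \<in> I \<Longrightarrow> \<phi> i \<in> OCdual"
  shows "p (\<lambda>f. \<Sum>i\<in>I. c i * \<phi> i f) \<le> (\<Sum>i\<in>I. cmod (c i) * p (\<phi> i))"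
  using assms(2,3)
proof (induction I rule: finite_induct)
  case empty then show ?case using p_Zf[OF p] by (simp add: Zf_def)
next
  case (insert i I)
  have eq: "(\<lambda>f. \<Sum>j\<in>insert i I. c j * \<phi> j f) = dadd (dscale (c i) (\<phi> i)) (\<lambda>f. \<Sum>j\<in>I. c j * \<phi> j f)"
    using insert by (simp add: dadd_def dscale_def)
  have pi: "\<phi> i \<in> OCdual" using insert by simp
  have rest: "(\<lambda>f. \<Sum>j\<in>I. c j * \<phi> j f) \<in> OCdual" using insert by (intro OCdual_lincomb) auto
  have "p (dadd (dscale (c i) (\<phi> i)) (\<lambda>f. \<Sum>j\<in>I. c j * \<phi> j f)) \<le> p (dscale (c i) (\<phi> i)) + p (\<lambda>f. \<Sum>j\<in>I. c j * \<phi> j f)"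
    using p OCdual_dscale[OF pi] rest unfolding dual_seminorm_def by blast
  also have "p (dscale (c i) (\<phi> i)) = cmod (c i) * p (\<phi> i)" using p pi unfolding dual_seminorm_def by blast
  also have "p (\<lambda>f. \<Sum>j\<in>I. c j * \<phi> j f) \<le> (\<Sum>j\<in>I. cmod (c j) * p (\<phi> j))" using insert by simp
  finally show ?case unfolding eq using insert by simp
qed



lemma powi_half1: "n \<ge> 0 \<Longrightarrow> (2::real) powi (- n) = (1/2) ^ (nat \<bar>n\<bar>)"
  unfolding power_int_def by (auto simp: power_one_over inverse_eq_divide)

lemma powi_half2: "n < 0 \<Longrightarrow> (1/2::real) powi (- n) = (1/2) ^ (nat \<bar>n\<bar>)"
  unfolding power_int_def by auto

lemma main2:
  assumes p: "dual_seminorm p" and sm: "submultiplicative p" and pc: "cont_seminorm p"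
  shows "\<exists>N M. M > 0 \<and> (\<forall>\<alpha>\<in>OCdual. p \<alpha> \<le> M * normN N \<alpha>)"
proof -
  have pnn: "\<And>\<alpha>. \<alpha> \<in> OCdual \<Longrightarrow> p \<alpha> \<ge> 0" using p unfolding dual_seminorm_def by blast
  have ptri: "\<And>\<alpha> \<beta>. \<alpha> \<in> OCdual \<Longrightarrow> \<beta> \<in> OCdual \<Longrightarrow> p (dadd \<alpha> \<beta>) \<le> p \<alpha> + p \<beta>"
    using p unfolding dual_seminorm_def by blast
  have psc: "\<And>c \<alpha>. \<alpha> \<in> OCdual \<Longrightarrow> p (dscale c \<alpha>) = cmod c * p \<alpha>"
    using p unfolding dual_seminorm_def by blast
  have "openin euclideanreal {..<(1::real)}" by simp
  then have "openin OCdual_top {x \<in> topspace OCdual_top. p x \<in> {..<1}}"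
    using pc[unfolded cont_seminorm_def continuous_map_def, THEN conjunct2, rule_format] by blast
  then have op: "openin OCdual_top {x \<in> OCdual. p x \<in> {..<1}}" by (simp only: topspace_OCdual_top)
  have Zin: "Zf \<in> {x \<in> OCdual. p x \<in> {..<1}}" using p_Zf[OF p] Zf_OCdual by simp
  obtain B e where B: "compactin OC_top B" "e > 0"
    "{\<beta> \<in> OCdual. \<forall>f\<in>B. cmod (\<beta> f - Zf f) \<le> e} \<subseteq> {x \<in> OCdual. p x \<in> {..<1}}"
    using op[unfolded openin_OCdual_top, THEN conjunct2, rule_format, OF Zin] by blast
  have BOC: "B \<subseteq> OC" using compactin_subset_topspace[OF B(1)] by (simp add: topspace_OC_top)
  have scal: "p \<beta> \<le> t / e" if b: "\<beta> \<in> OCdual" "t > 0" "\<forall>f\<in>B. cmod (\<beta> f) \<le> t" for \<beta> t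
  proof -
    define c where "c = complex_of_real (e / t)"
    have cn: "cmod c = e / t" unfolding c_def norm_of_real using B(2) b(2) by simp
    have "dscale c \<beta> \<in> {\<beta> \<in> OCdual. \<forall>f\<in>B. cmod (\<beta> f - Zf f) \<le> e}"
    proof (intro CollectI conjI ballI)
      show "dscale c \<beta> \<in> OCdual" by (rule OCdual_dscale[OF b(1)])
      fix f assume f: "f \<in> B"
      have "cmod (dscale c \<beta> f - Zf f) = (e / t) * cmod (\<beta> f)" by (simp add: dscale_def Zf_def norm_mult cn)
      also have "\<dots> \<le> (e / t) * t" using b(3) f B(2) b(2) by (intro mult_left_mono) auto
      also have "\<dots> = e" using b(2) by simp
      finally show "cmod (dscale c \<beta> f - Zf f) \<le> e" .
    qed
    then have "p (dscale c \<beta>) < 1" using B(3) by auto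
    then have "(e / t) * p \<beta> < 1" using psc[OF b(1)] cn by simp
    then show ?thesis using B(2) b(2) by (simp add: field_simps)
  qed
  have Kc: "compact (sphere (0::complex) 2 \<union> sphere 0 (1/2))" by (simp add: compact_Un)
  have Ks: "sphere (0::complex) 2 \<union> sphere 0 (1/2) \<subseteq> - {0}" by auto
  obtain MB where MB: "\<forall>f\<in>B. \<forall>z\<in>sphere 0 2 \<union> sphere 0 (1/2). cmod (f z) \<le> MB"
    using compactin_bound[OF B(1) Kc Ks] by blast
  define M1 where "M1 = \<bar>MB\<bar> + 1"
  have M1: "M1 > 0" by (simp add: M1_def)
  have epsb: "p (eps n) \<le> M1 * (1/2) ^ (nat \<bar>n\<bar>) / e" for n
  proof (rule scal[OF eps_OCdual])
    show "M1 * (1/2) ^ (nat \<bar>n\<bar>) > 0" using M1 by simp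
    show "\<forall>f\<in>B. cmod (eps n f) \<le> M1 * (1/2) ^ (nat \<bar>n\<bar>)"
    proof
      fix f assume f: "f \<in> B"
      then have fOC: "f \<in> OC" using BOC by blast
      have "cmod (lc f n) \<le> MB * (1/2) ^ (nat \<bar>n\<bar>)"
      proof (cases "n \<ge> 0")
        case True
        have "cmod (lc f n) \<le> MB * 2 powi (- n)"
          by (rule lc_bound[OF fOC]) (use MB f in auto)
        then show ?thesis using powi_half1[OF True] by simp
      next
        case False
        have "cmod (lc f n) \<le> MB * (1/2) powi (- n)"
          by (rule lc_bound[OF fOC]) (use MB f in auto)
        then show ?thesis using powi_half2[of n] False by simp
      qed
      also have "\<dots> \<le> M1 * (1/2) ^ (nat \<bar>n\<bar>)" by (intro mult_right_mono) (auto simp: M1_def)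
      finally show "cmod (eps n f) \<le> M1 * (1/2) ^ (nat \<bar>n\<bar>)" using fOC by (simp add: eps_def)
    qed
  qed
  obtain N where N: "(1/2::real) ^ N < e / M1" using real_arch_pow_inv[of "e / M1" "1/2"] M1 B(2) by auto
  have epsz: "p (eps n) = 0" if n: "n \<notin> {- int N..int N}" for n
  proof -
    have "N \<le> nat \<bar>n\<bar>" using n by auto
    then have "(1/2::real) ^ (nat \<bar>n\<bar>) \<le> (1/2) ^ N" by (intro power_decreasing) auto
    also note N
    finally have "M1 * (1/2::real) ^ (nat \<bar>n\<bar>) < e" using M1 by (simp add: field_simps)
    then have "M1 * (1/2::real) ^ (nat \<bar>n\<bar>) / e < 1" using B(2) by simp
    then have lt: "p (eps n) < 1" using epsb[of n] by linarith
    have ge: "p (eps n) \<ge> 0" by (rule pnn[OF eps_OCdual])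
    have "p (eps n) \<le> p (eps n) * p (eps n)"
      using sm eps_OCdual eps_idem[of n] unfolding submultiplicative_def by metis
    show ?thesis
    proof (rule ccontr)
      assume "p (eps n) \<noteq> 0"
      then have pos: "p (eps n) > 0" using ge by simp
      have "p (eps n) * p (eps n) < p (eps n) * 1" using pos lt by (intro mult_strict_left_mono) auto
      then show False using \<open>p (eps n) \<le> p (eps n) * p (eps n)\<close> by simp
    qed
  qed
  define P where "P = 1 + (\<Sum>n\<in>{- int N..int N}. p (eps n))"
  have P0: "P > 0" unfolding P_def using pnn[OF eps_OCdual] by (simp add: add_pos_nonneg sum_nonneg)
  have Pge: "p (eps n) \<le> P" if "n \<in> {- int N..int N}" for n
  proof -
    have "p (eps n) \<le> (\<Sum>n\<in>{- int N..int N}. p (eps n))"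
      using member_le_sum[of n "{- int N..int N}" "\<lambda>n. p (eps n)"] that pnn[OF eps_OCdual] by simp
    then show ?thesis unfolding P_def by simp
  qed
  have "\<forall>\<alpha>\<in>OCdual. p \<alpha> \<le> P * normN N \<alpha>"
  proof
    fix \<alpha> assume a: "\<alpha> \<in> OCdual"
    have la: "islin \<alpha>" using a by (rule OCdual_islin)
    obtain K C where KC: "compact K" "K \<subseteq> - {0}" "C > 0"
      "\<forall>g\<in>OC. \<forall>t\<ge>0. (\<forall>z\<in>K. cmod (g z) \<le> t) \<longrightarrow> cmod (\<alpha> g) \<le> C * t"
      using OCdual_bound[OF a] by blast
    have bd: "\<And>g t. g \<in> OC \<Longrightarrow> t \<ge> 0 \<Longrightarrow> (\<forall>z\<in>K. cmod (g z) \<le> t) \<Longrightarrow> cmod (\<alpha> g) \<le> C * t"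
      using KC(4) by blast
    have C0: "C \<ge> 0" using KC(3) by simp
    obtain r R where rR: "r > 0" "R > 0" and ap: "\<forall>f M k. f \<in> OC \<longrightarrow> (\<forall>w. cmod w = r \<longrightarrow> cmod (f w) \<le> M) \<longrightarrow>
        (\<forall>w. cmod w = R \<longrightarrow> cmod (f w) \<le> M) \<longrightarrow>
        cmod (\<alpha> f - (\<Sum>n\<in>{- int k - 1..int k}. lc f n * coef \<alpha> n)) \<le> C * (3 * M * (1/2) ^ Suc k)"
      using approx[OF la KC(1,2) C0 bd] by blast
    have Kc2: "compact (sphere (0::complex) r \<union> sphere 0 R)" by (simp add: compact_Un)
    have Ks2: "sphere (0::complex) r \<union> sphere 0 R \<subseteq> - {0}" using rR by auto
    obtain MB2 where MB2: "\<forall>f\<in>B. \<forall>z\<in>sphere 0 r \<union> sphere 0 R. cmod (f z) \<le> MB2"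
      using compactin_bound[OF B(1) Kc2 Ks2] by blast
    define D where "D = (C * (3 * \<bar>MB2\<bar>) + 1) / e"
    have key: "p \<alpha> - P * normN N \<alpha> \<le> D * (1/2) ^ Suc k" if k: "k \<ge> N" for k
    proof -
      define S where "S = (\<lambda>f. \<Sum>n\<in>{- int k - 1..int k}. coef \<alpha> n * eps n f)"
      have SD: "S \<in> OCdual" unfolding S_def by (rule OCdual_lincomb) (auto intro: eps_OCdual)
      define \<beta> where "\<beta> = dadd \<alpha> (dscale (-1) S)"
      have bD: "\<beta> \<in> OCdual" unfolding \<beta>_def by (intro OCdual_dadd OCdual_dscale a SD)
      have aeq: "\<alpha> = dadd S \<beta>" unfolding \<beta>_def by (rule ext) (simp add: dadd_def dscale_def)
      have "p \<alpha> \<le> p S + p \<beta>" using ptri[OF SD bD] aeq by simp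
      moreover have "p S \<le> P * normN N \<alpha>"
      proof -
        have "p S \<le> (\<Sum>n\<in>{- int k - 1..int k}. cmod (coef \<alpha> n) * p (eps n))"
          unfolding S_def by (rule p_lincomb[OF p]) (auto intro: eps_OCdual)
        also have "\<dots> = (\<Sum>n\<in>{- int N..int N}. cmod (coef \<alpha> n) * p (eps n))"
          by (rule sum.mono_neutral_right) (use k epsz in auto)
        also have "\<dots> \<le> (\<Sum>n\<in>{- int N..int N}. cmod (coef \<alpha> n) * P)"
          by (rule sum_mono) (use Pge in \<open>auto intro: mult_left_mono\<close>)
        also have "\<dots> = P * normN N \<alpha>" unfolding normN_def by (simp add: sum_distrib_left mult.commute)
        finally show ?thesis .
      qed
      moreover have "p \<beta> \<le> D * (1/2) ^ Suc k"
      proof -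
        have "p \<beta> \<le> ((C * (3 * \<bar>MB2\<bar>) + 1) * (1/2) ^ Suc k) / e"
        proof (rule scal[OF bD])
          show "(C * (3 * \<bar>MB2\<bar>) + 1) * (1/2::real) ^ Suc k > 0" using C0 by (simp add: add_nonneg_pos)
          show "\<forall>f\<in>B. cmod (\<beta> f) \<le> (C * (3 * \<bar>MB2\<bar>) + 1) * (1/2) ^ Suc k"
          proof
            fix f assume f: "f \<in> B"
            then have fOC: "f \<in> OC" using BOC by blast
            have br: "\<forall>w. cmod w = r \<longrightarrow> cmod (f w) \<le> \<bar>MB2\<bar>"
            proof (intro allI impI)
              fix w :: complex assume "cmod w = r"
              then have "w \<in> sphere 0 r \<union> sphere 0 R" by simp
              then have "cmod (f w) \<le> MB2" using MB2 f by blast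
              then show "cmod (f w) \<le> \<bar>MB2\<bar>" by linarith
            qed
            have bR: "\<forall>w. cmod w = R \<longrightarrow> cmod (f w) \<le> \<bar>MB2\<bar>"
            proof (intro allI impI)
              fix w :: complex assume "cmod w = R"
              then have "w \<in> sphere 0 r \<union> sphere 0 R" by simp
              then have "cmod (f w) \<le> MB2" using MB2 f by blast
              then show "cmod (f w) \<le> \<bar>MB2\<bar>" by linarith
            qed
            have "\<beta> f = \<alpha> f - (\<Sum>n\<in>{- int k - 1..int k}. lc f n * coef \<alpha> n)"
              using fOC by (simp add: \<beta>_def S_def dadd_def dscale_def eps_def mult.commute)
            then have "cmod (\<beta> f) \<le> C * (3 * \<bar>MB2\<bar> * (1/2) ^ Suc k)"
              using ap fOC br bR by simp
            also have "\<dots> \<le> (C * (3 * \<bar>MB2\<bar>) + 1) * (1/2) ^ Suc k" by (simp add: algebra_simps)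
            finally show "cmod (\<beta> f) \<le> (C * (3 * \<bar>MB2\<bar>) + 1) * (1/2) ^ Suc k" .
          qed
        qed
        then show ?thesis by (simp add: D_def)
      qed
      ultimately show ?thesis by simp
    qed
    have "p \<alpha> - P * normN N \<alpha> \<le> 0" by (rule small_le_zero[of N]) (rule key)
    then show "p \<alpha> \<le> P * normN N \<alpha>" by simp
  qed
  then show ?thesis using P0 by blast
qed


theorem mainTheorem15:
  shows "(\<forall>N. dual_seminorm (normN N) \<and> submultiplicative (normN N) \<and> cont_seminorm (normN N))
    \<and> (\<forall>p. dual_seminorm p \<and> submultiplicative p \<and> cont_seminorm p \<longrightarrow>
          (\<exists>N M. M > 0 \<and> (\<forall>\<alpha>\<in>OCdual. p \<alpha> \<le> M * normN N \<alpha>)))"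
  using normN_seminorm normN_submult normN_cont main2 by blast

end
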